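(* Let $L\ge 1$, $N=2^L$, and let $\mathbb{F}_q$ be a finite field of odd characteristic. For $i\in\{1,\ldots,L\}$ let $\mathbf{V}_i$ be the $N\times\frac{N}{2}$ matrix whose columns are the elements of $\mathcal{V}_i=\left\{\prod_{s=1,s\ne i}^{L}\mathbf{X}_s^{x_s}\mathbf{w} : x_s\in\{0,1\}\right\}$. Then for any $i,j\in\{1,\ldots,L\}$, $$\mathrm{rank}\big([\mathbf{V}_i\ \ \mathbf{X}_j\mathbf{V}_i]\big)=\big|\mathcal{L}(\mathbf{V}_i)\cup\mathcal{L}(\mathbf{X}_j\mathbf{V}_i)\big|=\begin{cases}N,& i=j,\\ \frac{N}{2},& i\ne j.\end{cases}$$
   Context: $\mathbf{X}_s=\mathbf{I}_{2^{s-1}}\otimes\mathrm{blkdiag}\big(\mathbf{I}_{N/2^s},-\mathbf{I}_{N/2^s}\big)$ for $s\in\{1,\ldots,L\}$ (diagonal $N\times N$ with entries $\pm1$, so $\mathbf{X}_s^2=\mathbf{I}_N$ and the $\mathbf{X}_s$ commute); $\mathbf{w}$ is the all-ones vector of length $N$. Lattice representation: every matrix whose columns are vectors of the form $\prod_{s=1}^L\mathbf{X}_s^{x_s}\mathbf{w}$ with $(x_1,\ldots,x_L)\in\{0,1\}^L$ is mapped by $\mathcal{L}$ to the set of exponent vectors $(x_1,\ldots,x_L)$ of its columns (exponents taken mod $2$, since $\mathbf{X}_s^2=\mathbf{I}_N$). Thus $\mathcal{L}(\mathbf{X}_j\mathbf{V}_i)=\{x+e_j \bmod 2 : x\in\mathcal{L}(\mathbf{V}_i)\}$,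 with $e_j$ the $j$-th unit vector. *)

theory Defs
  imports "Jordan_Normal_Form.DL_Rank"
begin

text \<open>Row/column indices of JNF matrices are 0-based; the index s of X_s is 1-based
  (s \<in> {1..L}). An exponent vector (x_1,...,x_L) \<in> {0,1}^L is a list xs of length L with
  entries in {0,1}, where x_s = xs ! (s-1).\<close>

definition Xmat :: "nat \<Rightarrow> nat \<Rightarrow> 'a::ring_1 mat" where
  "Xmat L s = mat (2^L) (2^L)
     (\<lambda>(r,c). if r = c then (if even (r div (2^L div 2^s)) then 1 else -1) else 0)"
  \<comment> \<open>X_s = I_{2^(s-1)} \<otimes> blkdiag(I_{N/2^s}, -I_{N/2^s})\<close>

definition wvec :: "nat \<Rightarrow> 'a::ring_1 vec" where
  "wvec L = vec (2^L) (\<lambda>_. 1)"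

definition expvecs :: "nat \<Rightarrow> nat list set" where
  "expvecs L = {xs. length xs = L \<and> set xs \<subseteq> {0,1}}"

definition prodX :: "nat \<Rightarrow> nat list \<Rightarrow> 'a::ring_1 mat" where
  "prodX L xs = foldr (\<lambda>s M. (Xmat L s ^\<^sub>m (xs ! (s - 1))) * M) [1..<L+1] (1\<^sub>m (2^L))"

definition colv :: "nat \<Rightarrow> nat list \<Rightarrow> 'a::ring_1 vec" where
  "colv L xs = prodX L xs *\<^sub>v wvec L"

definition Vset :: "nat \<Rightarrow> nat \<Rightarrow> 'a::ring_1 vec set" where
  "Vset L i = {colv L xs | xs. xs \<in> expvecs L \<and> xs ! (i - 1) = 0}"

text \<open>Lattice representation: the set of exponent vectors of the columns of a matrix.\<close>
definition latt :: "nat \<Rightarrow> 'a::ring_1 mat \<Rightarrow> nat list set" where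
  "latt L M = {xs \<in> expvecs L. colv L xs \<in> set (cols M)}"

definition hcat :: "'a mat \<Rightarrow> 'a mat \<Rightarrow> 'a mat" where
  "hcat A B = mat_of_cols (dim_row A) (cols A @ cols B)"

end

theory Submission imports Defs begin

definition dg :: "nat \<Rightarrow> (nat \<Rightarrow> 'a::ring_1) \<Rightarrow> 'a mat" where
  "dg n f = mat n n (\<lambda>(r,c). if r = c then f r else 0)"

lemma dg_carrier[simp]: "dg n f \<in> carrier_mat n n" by (simp add: dg_def)

lemma dg_dim[simp]: "dim_row (dg n f) = n" "dim_col (dg n f) = n" by (auto simp: dg_def)

lemma dg_mult: "dg n f * dg n g = dg n (\<lambda>r. f r * g r)"
proof (rule eq_matI)
  fix r c assume rc: "r < dim_row (dg n (\<lambda>r. f r * g r))" "c < dim_col (dg n (\<lambda>r. f r * g r))"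
  hence r: "r < n" and c: "c < n" by (auto simp: dg_def)
  have "(dg n f * dg n g) $$ (r,c) = (\<Sum>k\<in>{0..<n}. (if r = k then f r else 0) * (if k = c then g k else 0))"
    using r c by (simp add: dg_def scalar_prod_def row_def col_def)
  also have "\<dots> = (\<Sum>k\<in>{0..<n}. if k = r then (if r = c then f r * g r else 0) else 0)"
    by (rule sum.cong) auto
  also have "\<dots> = (if r = c then f r * g r else 0)" using r by simp
  finally show "(dg n f * dg n g) $$ (r,c) = dg n (\<lambda>r. f r * g r) $$ (r,c)"
    using r c by (simp add: dg_def)
qed (auto simp: dg_def)

lemma one_dg: "1\<^sub>m n = dg n (\<lambda>_. 1)"
  by (rule eq_matI) (auto simp: dg_def)

lemma dg_pow: "dg n f ^\<^sub>m k = dg n (\<lambda>r. f r ^ k)"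
  by (induction k) (simp_all add: one_dg dg_mult power_commutes)

lemma dg_mult_vec: "dg n f *\<^sub>v v = vec n (\<lambda>r. f r * v $ r)" if "v \<in> carrier_vec n"
proof (rule eq_vecI)
  fix r assume "r < dim_vec (vec n (\<lambda>r. f r * v $ r))"
  hence r: "r < n" by simp
  have "(dg n f *\<^sub>v v) $ r = (\<Sum>k\<in>{0..<n}. (if r = k then f r else 0) * v $ k)"
    using r that by (simp add: dg_def scalar_prod_def row_def)
  also have "\<dots> = (\<Sum>k\<in>{0..<n}. if k = r then f r * v $ r else 0)"
    by (rule sum.cong) auto
  also have "\<dots> = f r * v $ r" using r by simp
  finally show "(dg n f *\<^sub>v v) $ r = vec n (\<lambda>r. f r * v $ r) $ r" using r by simp
qed (simp add: dg_def)

definition bt :: "nat \<Rightarrow> nat \<Rightarrow> nat \<Rightarrow> nat" where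
  "bt L s r = (if bit r (L - s) then 1 else 0)"

definition wal :: "nat \<Rightarrow> nat list \<Rightarrow> nat \<Rightarrow> 'a::ring_1" where
  "wal L xs r = (-1) ^ (\<Sum>s\<in>{1..L}. xs!(s-1) * bt L s r)"

lemma Xmat_dg: "s \<le> L \<Longrightarrow> Xmat L s = dg (2^L) (\<lambda>r. (-1) ^ bt L s r)"
  unfolding Xmat_def dg_def bt_def
  by (rule eq_matI) (auto simp: power_diff bit_nat_def)

lemma foldr_dg: "\<forall>s\<in>set ss. s \<le> L \<Longrightarrow>
   foldr (\<lambda>s M. (Xmat L s ^\<^sub>m (xs ! (s - 1))) * M) ss (1\<^sub>m (2^L))
   = (dg (2^L) (\<lambda>r. \<Prod>s\<leftarrow>ss. ((-1) ^ bt L s r) ^ (xs ! (s - 1))) :: 'a::ring_1 mat)"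
  by (induction ss) (auto simp: one_dg Xmat_dg dg_pow dg_mult)

lemma colv_wal: "colv L xs = (vec (2^L) (wal L xs) :: 'a::comm_ring_1 vec)"
proof -
  have "prodX L xs = (dg (2^L) (\<lambda>r. \<Prod>s\<leftarrow>[1..<L+1]. ((-1) ^ bt L s r) ^ (xs ! (s - 1))) :: 'a mat)"
    unfolding prodX_def by (rule foldr_dg) auto
  also have "\<dots> = dg (2^L) (wal L xs)"
  proof -
    have "(\<Prod>s\<leftarrow>[1..<L+1]. ((-1::'a) ^ bt L s r) ^ (xs ! (s - 1))) = wal L xs r" for r
    proof -
      have "(\<Prod>s\<leftarrow>[1..<L+1]. ((-1::'a) ^ bt L s r) ^ (xs ! (s - 1)))
          = (\<Prod>s\<in>{1..L}. (-1::'a) ^ (xs ! (s - 1) * bt L s r))"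
      proof -
        have "(\<Prod>s\<leftarrow>[1..<L+1]. ((-1::'a) ^ bt L s r) ^ (xs ! (s - 1)))
           = (\<Prod>s\<in>set [1..<L+1]. ((-1::'a) ^ bt L s r) ^ (xs ! (s - 1)))"
          by (simp only: prod.distinct_set_conv_list distinct_upt)
        also have "set [1..<L+1] = {1..L}" by auto
        finally show ?thesis by (simp add: power_mult[symmetric] mult.commute)
      qed
      also have "\<dots> = wal L xs r" by (simp add: wal_def power_sum)
      finally show ?thesis .
    qed
    thus ?thesis by simp
  qed
  finally have "(prodX L xs :: 'a mat) = dg (2^L) (wal L xs)" .
  thus ?thesis unfolding colv_def wvec_def
    by (auto simp: dg_mult_vec intro!: eq_vecI)
qed


definition fl :: "nat \<Rightarrow> nat list \<Rightarrow> nat list" where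
  "fl j xs = xs[j-1 := 1 - xs!(j-1)]"

lemma expvecs_nth: "xs \<in> expvecs L \<Longrightarrow> k < L \<Longrightarrow> xs ! k = 0 \<or> xs ! k = 1"
  unfolding expvecs_def using nth_mem by fastforce

lemma fl_expvecs: "xs \<in> expvecs L \<Longrightarrow> j \<in> {1..L} \<Longrightarrow> fl j xs \<in> expvecs L"
  unfolding expvecs_def fl_def using set_update_subset_insert by fastforce

lemma fl_nth: "length xs = L \<Longrightarrow> j \<in> {1..L} \<Longrightarrow> s \<in> {1..L} \<Longrightarrow>
    fl j xs ! (s-1) = (if s = j then 1 - xs!(s-1) else xs!(s-1))"
  unfolding fl_def by (auto simp: nth_list_update)

lemma fl_fl: "xs \<in> expvecs L \<Longrightarrow> j \<in> {1..L} \<Longrightarrow> fl j (fl j xs) = xs"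
proof -
  assume xs: "xs \<in> expvecs L" and j: "j \<in> {1..L}"
  have x: "xs ! (j-1) = 0 \<or> xs ! (j-1) = 1" using expvecs_nth[OF xs, of "j-1"] j by auto
  have l: "j - 1 < length xs" using xs j by (auto simp: expvecs_def)
  have "1 - (1 - xs!(j-1)) = xs!(j-1)" using x by auto
  hence "fl j (fl j xs) = xs[j-1 := 1 - xs!(j-1), j-1 := xs!(j-1)]"
    unfolding fl_def using l by (simp only: nth_list_update_eq)
  also have "\<dots> = xs" by (simp only: list_update_overwrite list_update_id)
  finally show ?thesis .
qed

lemma neg1_par: "even m = even n \<Longrightarrow> ((-1::'a::ring_1) ^ m) = (-1) ^ n"
  by (simp add: minus_one_power_iff)

lemma bt_01: "bt L s r = 0 \<or> bt L s r = 1" by (simp add: bt_def)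

lemma wal_fl:
  assumes xs: "xs \<in> expvecs L" and j: "j \<in> {1..L}"
  shows "(-1) ^ (bt L j r) * wal L xs r = (wal L (fl j xs) r :: 'a::ring_1)"
proof -
  have len: "length xs = L" using xs by (simp add: expvecs_def)
  define T where "T = (\<Sum>s\<in>{1..L}-{j}. xs!(s-1) * bt L s r)"
  have T': "(\<Sum>s\<in>{1..L}-{j}. fl j xs!(s-1) * bt L s r) = T"
  proof -
    have "\<And>s. s\<in>{1..L}-{j} \<Longrightarrow> fl j xs!(s-1) = xs!(s-1)" using fl_nth[OF len j] by auto
    thus ?thesis unfolding T_def by (intro sum.cong) auto
  qed
  have e1: "(\<Sum>s\<in>{1..L}. xs!(s-1) * bt L s r) = xs!(j-1) * bt L j r + T"
    unfolding T_def using j by (simp add: sum.remove)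
  have fj: "fl j xs!(j-1) = 1 - xs!(j-1)" using fl_nth[OF len j j] by simp
  have e2: "(\<Sum>s\<in>{1..L}. fl j xs!(s-1) * bt L s r) = fl j xs!(j-1) * bt L j r + (\<Sum>s\<in>{1..L}-{j}. fl j xs!(s-1) * bt L s r)"
    using j by (intro sum.remove) auto
  note e2 = e2[unfolded T' fj]
  have x01: "xs ! (j-1) = 0 \<or> xs ! (j-1) = 1" using expvecs_nth[OF xs, of "j-1"] j by auto
  have "even (bt L j r + (xs!(j-1) * bt L j r + T)) = even ((1 - xs!(j-1)) * bt L j r + T)"
    using x01 by auto
  hence "(-1::'a) ^ (bt L j r + (xs!(j-1) * bt L j r + T)) = (-1) ^ ((1 - xs!(j-1)) * bt L j r + T)"
    by (rule neg1_par)
  thus ?thesis unfolding wal_def e1 e2 by (simp add: power_add)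
qed

unbundle bit_operations_syntax

lemma wal_orth:
  assumes xs: "xs \<in> expvecs L" and ys: "ys \<in> expvecs L" and ne: "xs \<noteq> ys"
    and two: "(2::'a::field) \<noteq> 0"
  shows "(\<Sum>r<2^L. wal L xs r * wal L ys r :: 'a) = 0"
proof -
  have lx: "length xs = L" and ly: "length ys = L" using xs ys by (auto simp: expvecs_def)
  obtain k where k: "k < L" "xs ! k \<noteq> ys ! k" using lx ly ne nth_equalityI by metis
  define j where "j = Suc k"
  have j: "j \<in> {1..L}" "xs!(j-1) \<noteq> ys!(j-1)" using k by (auto simp: j_def)
  define c where "c = L - j"
  have cL: "c < L" using j by (auto simp: c_def)
  define \<sigma> where "\<sigma> r = r XOR 2^c" for r :: nat
  have bs: "bit (\<sigma> r) m \<longleftrightarrow> bit r m \<noteq> (m = c)" for r m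
    by (simp add: \<sigma>_def bit_xor_iff bit_exp_iff)
  have ss: "\<sigma> (\<sigma> r) = r" for r by (rule bit_eqI) (auto simp: bs)
  have sl: "\<sigma> r < 2^L" if "r < 2^L" for r
  proof -
    have "take_bit L r = r" using that by (simp add: take_bit_nat_eq_self_iff)
    hence "m < L" if "bit r m" for m using that by (metis bit_take_bit_iff)
    hence "take_bit L (\<sigma> r) = \<sigma> r" using cL
      by (intro bit_eqI) (auto simp: bit_take_bit_iff bs)
    thus ?thesis by (simp add: take_bit_nat_eq_self_iff)
  qed
  have btS: "bt L s (\<sigma> r) = (if s = j then 1 - bt L s r else bt L s r)" if "s \<in> {1..L}" for s r
  proof -
    have "(L - s = c) = (s = j)" using that j by (auto simp: c_def)
    thus ?thesis by (auto simp: bt_def bs)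
  qed
  define g where "g r = wal L xs r * (wal L ys r :: 'a)" for r
  define cc where "cc s = xs!(s-1) + ys!(s-1)" for s
  have cj: "cc j = 1" using k expvecs_nth[OF xs k(1)] expvecs_nth[OF ys k(1)]
    by (auto simp: cc_def j_def)
  define T where "T r = (\<Sum>s\<in>{1..L}-{j}. cc s * bt L s r)" for r
  have Ts: "T (\<sigma> r) = T r" for r unfolding T_def by (rule sum.cong) (auto simp: btS)
  have gT: "g r = (-1) ^ (bt L j r + T r)" for r
  proof -
    have "g r = (-1) ^ (\<Sum>s\<in>{1..L}. cc s * bt L s r)"
      unfolding g_def wal_def cc_def by (simp add: power_add[symmetric] sum.distrib distrib_right)
    also have "(\<Sum>s\<in>{1..L}. cc s * bt L s r) = bt L j r + T r"
      unfolding T_def using j cj by (simp add: sum.remove)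
    finally show ?thesis .
  qed
  have gs: "g (\<sigma> r) = - g r" for r
  proof -
    have "bt L j (\<sigma> r) = 1 - bt L j r" using btS[OF j(1)] by simp
    hence "even (bt L j (\<sigma> r) + T (\<sigma> r)) = odd (bt L j r + T r)" using bt_01[of L j r] Ts[of r]
      by auto
    thus ?thesis unfolding gT by (auto simp: minus_one_power_iff)
  qed
  have "(\<Sum>r<2^L. g r) = (\<Sum>r<2^L. g (\<sigma> r))"
    by (rule sum.reindex_bij_witness[of _ \<sigma> \<sigma>]) (auto simp: ss sl)
  also have "\<dots> = - (\<Sum>r<2^L. g r)" by (simp add: gs sum_negf)
  finally have e: "(\<Sum>r<2^L. g r) = - (\<Sum>r<2^L. g r)" .
  have "(\<Sum>r<2^L. g r) + (\<Sum>r<2^L. g r) = 0" by (subst (2) e) (rule add.right_inverse)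
  hence "2 * (\<Sum>r<2^L. g r) = 0" by (simp only: mult_2)
  hence "(\<Sum>r<2^L. g r) = 0" using two by (metis mult_eq_0_iff)
  thus ?thesis by (simp add: g_def)
qed

lemma wal_self: "wal L xs r * wal L xs r = (1::'a::ring_1)"
  unfolding wal_def by (simp add: power_add[symmetric] minus_one_power_iff)


lemma two_ne:
  assumes "odd CHAR('a::field)" shows "(2::'a) \<noteq> 0"
proof
  assume "(2::'a) = 0"
  hence "of_nat 2 = (0::'a)" by simp
  hence d: "CHAR('a) dvd 2" by (simp only: of_nat_eq_0_iff_char_dvd)
  have "CHAR('a) \<noteq> 2" using assms by auto
  moreover have "CHAR('a) \<noteq> 1"
  proof
    assume "CHAR('a) = 1"
    hence "of_nat 1 = (0::'a)" by (simp only: of_nat_eq_0_iff_char_dvd) simp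
    thus False by simp
  qed
  moreover have "CHAR('a) \<le> 2" "CHAR('a) > 0" using d by (auto dest: dvd_imp_le intro: Nat.gr0I)
  ultimately show False by linarith
qed

lemma (in vec_space) orth_lin_indpt:
  assumes S: "S \<subseteq> carrier_vec n" and fin: "finite S"
    and orth: "\<And>u w. u \<in> S \<Longrightarrow> w \<in> S \<Longrightarrow> u \<noteq> w \<Longrightarrow> u \<bullet> w = 0"
    and self: "\<And>w. w \<in> S \<Longrightarrow> w \<bullet> w \<noteq> 0"
  shows "lin_indpt S"
proof
  assume "lin_dep S"
  then obtain a v where lc: "lincomb a S = 0\<^sub>v n" and v: "v \<in> S" and av: "a v \<noteq> 0"
    using finite_lin_dep[OF fin _ S] by auto
  have vd: "dim_vec v = n" using v S by auto
  have vc: "v \<in> carrier_vec n" using v S by auto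
  have "0 = lincomb a S \<bullet> v" using lc vc by simp
  also have "\<dots> = (\<Sum>i\<in>{0..<n}. (\<Sum>x\<in>S. a x * x $ i) * v $ i)"
    unfolding scalar_prod_def vd using lincomb_index[OF _ S] by simp
  also have "\<dots> = (\<Sum>x\<in>S. a x * (x \<bullet> v))"
    unfolding scalar_prod_def vd
    by (simp add: sum_distrib_right sum_distrib_left mult.assoc sum.swap[of _ S])
  also have "\<dots> = a v * (v \<bullet> v) + (\<Sum>x\<in>S-{v}. a x * (x \<bullet> v))"
    using fin v by (simp add: sum.remove)
  also have "(\<Sum>x\<in>S-{v}. a x * (x \<bullet> v)) = 0"
    using orth v by (intro sum.neutral) auto
  finally have "a v * (v \<bullet> v) = 0" by simp
  thus False using av self[OF v] by simp
qed

lemma (in vec_space) rank_indpt: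
  assumes "A \<in> carrier_mat n nc" and "lin_indpt (set (cols A))"
  shows "rank A = card (set (cols A))"
  by (rule rank_card_indpt[OF assms(1)]) (use assms(2) in \<open>auto simp: maximal_def\<close>)

lemma colv_dim[simp]: "(colv L xs :: 'a::comm_ring_1 vec) \<in> carrier_vec (2^L)" "dim_vec (colv L xs :: 'a::comm_ring_1 vec) = 2^L"
  by (simp_all add: colv_wal)

lemma expvecs_finite: "finite (expvecs L)"
proof -
  have "expvecs L = {xs. set xs \<subseteq> {0,1} \<and> length xs = L}" by (auto simp: expvecs_def)
  thus ?thesis by (simp add: finite_lists_length_eq)
qed

lemma colv_sp: "colv L xs \<bullet> colv L ys = (\<Sum>r<2^L. wal L xs r * wal L ys r :: 'a::comm_ring_1)"
  by (simp add: colv_wal scalar_prod_def atLeast0LessThan)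

lemma colv_inj:
  assumes "(2::'a::field) \<noteq> 0" "xs \<in> expvecs L" "ys \<in> expvecs L" "(colv L xs :: 'a vec) = colv L ys"
  shows "xs = ys"
proof (rule ccontr)
  assume ne: "xs \<noteq> ys"
  have "(colv L xs :: 'a vec) \<bullet> colv L ys = 0" using wal_orth[OF assms(2,3) ne assms(1)] colv_sp by metis
  moreover have "(colv L xs :: 'a vec) \<bullet> colv L xs = of_nat (2^L)" by (simp add: colv_sp wal_self)
  moreover have "(of_nat (2^L) :: 'a) \<noteq> 0" using assms(1) by simp
  ultimately show False using assms(4) by simp
qed

lemma (in vec_space) colv_indpt:
  assumes "(2::'a) \<noteq> 0" "E \<subseteq> expvecs L" "n = 2^L"
  shows "lin_indpt ((colv L :: _ \<Rightarrow> 'a vec) ` E)"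
proof (rule orth_lin_indpt)
  show "finite ((colv L :: _ \<Rightarrow> 'a vec) ` E)"
    using assms(2) expvecs_finite finite_subset by blast
next
  fix u w assume "u \<in> (colv L :: _ \<Rightarrow> 'a vec) ` E" "w \<in> (colv L :: _ \<Rightarrow> 'a vec) ` E" "u \<noteq> w"
  then obtain xs ys where "xs \<in> E" "ys \<in> E" "u = colv L xs" "w = colv L ys" "xs \<noteq> ys" by auto
  thus "u \<bullet> w = 0" using wal_orth[of xs L ys] assms by (auto simp: colv_sp)
qed (use assms in \<open>auto simp: colv_sp wal_self\<close>)

lemma Xmat_colv:
  assumes "xs \<in> expvecs L" "j \<in> {1..L}"
  shows "Xmat L j *\<^sub>v (colv L xs :: 'a::comm_ring_1 vec) = colv L (fl j xs)"
  using assms by (auto simp: Xmat_dg colv_wal dg_mult_vec wal_fl intro!: eq_vecI)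


lemma set_cols_mult:
  assumes "X \<in> carrier_mat n n" "V \<in> carrier_mat n nc"
  shows "set (cols (X * V)) = (\<lambda>v. X *\<^sub>v v) ` set (cols V)"
proof -
  have "set (cols (X * V)) = col (X * V) ` {0..<nc}" using assms by (simp add: cols_def)
  also have "\<dots> = (\<lambda>k. X *\<^sub>v col V k) ` {0..<nc}" using assms
    by (intro image_cong) (auto simp: col_mult2)
  also have "\<dots> = (\<lambda>v. X *\<^sub>v v) ` set (cols V)" using assms by (auto simp: cols_def)
  finally show ?thesis .
qed

theorem lemma2:
  fixes V :: "'a::{field,finite} mat" and L i j :: nat
  assumes char: "odd CHAR('a)"
    and L: "L \<ge> 1"
    and i: "i \<in> {1..L}" and j: "j \<in> {1..L}"
    and Vdim: "V \<in> carrier_mat (2^L) (2^L div 2)"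
    and Vcols: "set (cols V) = Vset L i"
  shows "vec_space.rank (2^L) (hcat V (Xmat L j * V)) = card (latt L V \<union> latt L (Xmat L j * V))
       \<and> card (latt L V \<union> latt L (Xmat L j * V)) = (if i = j then 2^L else 2^L div 2)"
proof -
  interpret vs: vec_space "TYPE('a)" "2^L" .
  have two: "(2::'a) \<noteq> 0" using two_ne[OF char] .
  define A where "A = {xs \<in> expvecs L. xs!(i-1) = 0}"
  have AE: "A \<subseteq> expvecs L" by (auto simp: A_def)
  have flAE: "fl j ` A \<subseteq> expvecs L" using AE fl_expvecs[OF _ j] by auto
  have injE: "inj_on (colv L :: _ \<Rightarrow> 'a vec) (expvecs L)"
    using colv_inj[OF two] by (auto intro: inj_onI)
  have cV: "set (cols V) = (colv L :: _ \<Rightarrow> 'a vec) ` A"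
    unfolding Vcols Vset_def A_def by auto
  have Xc: "(Xmat L j :: 'a mat) \<in> carrier_mat (2^L) (2^L)"
    using j by (simp add: Xmat_dg)
  have XVc: "Xmat L j * V \<in> carrier_mat (2^L) (2^L div 2)" using Xc Vdim by auto
  have cXV: "set (cols (Xmat L j * V)) = (colv L :: _ \<Rightarrow> 'a vec) ` (fl j ` A)"
  proof -
    have "set (cols (Xmat L j * V)) = (\<lambda>v. Xmat L j *\<^sub>v v) ` (colv L ` A)"
      using set_cols_mult[OF Xc Vdim] cV by simp
    also have "\<dots> = (\<lambda>xs. Xmat L j *\<^sub>v (colv L xs :: 'a vec)) ` A" by (simp only: image_image)
    also have "\<dots> = (\<lambda>xs. colv L (fl j xs)) ` A"
      by (rule image_cong[OF refl]) (use AE Xmat_colv[OF _ j] in blast)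
    also have "\<dots> = (colv L :: _ \<Rightarrow> 'a vec) ` (fl j ` A)" by (simp only: image_image)
    finally show ?thesis .
  qed
  have lV: "latt L V = A"
  proof (rule Set.set_eqI)
    fix xs show "xs \<in> latt L V \<longleftrightarrow> xs \<in> A"
      unfolding latt_def cV using AE inj_on_image_mem_iff[OF injE, of xs A] by auto
  qed
  have lXV: "latt L (Xmat L j * V) = fl j ` A"
  proof (rule Set.set_eqI)
    fix xs show "xs \<in> latt L (Xmat L j * V) \<longleftrightarrow> xs \<in> fl j ` A"
      unfolding latt_def cXV using flAE inj_on_image_mem_iff[OF injE, of xs "fl j ` A"] by auto
  qed
  have colsH: "cols (hcat V (Xmat L j * V)) = cols V @ cols (Xmat L j * V)"
    unfolding hcat_def using Vdim XVc by (intro cols_mat_of_cols) (auto simp: cols_def)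
  have Hc: "hcat V (Xmat L j * V) \<in> carrier_mat (2^L) (2^L div 2 + 2^L div 2)"
    unfolding hcat_def using Vdim XVc by auto
  have setH: "set (cols (hcat V (Xmat L j * V))) = (colv L :: _ \<Rightarrow> 'a vec) ` (A \<union> fl j ` A)"
    unfolding colsH using cV cXV by auto
  have indep: "vs.lin_indpt (set (cols (hcat V (Xmat L j * V))))"
    unfolding setH by (rule vs.colv_indpt[OF two]) (use AE flAE in auto)
  have rk: "vs.rank (hcat V (Xmat L j * V)) = card (A \<union> fl j ` A)"
    using vs.rank_indpt[OF Hc indep] setH card_image[OF inj_on_subset[OF injE, of "A \<union> fl j ` A"]]
      AE flAE by simp
  have nthi: "fl i xs ! (i-1) = 1 - xs!(i-1)" if "xs \<in> expvecs L" for xs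
    using fl_nth[of xs L i i] that i by (simp add: expvecs_def)
  have Eun: "expvecs L = A \<union> fl i ` A"
  proof
    show "expvecs L \<subseteq> A \<union> fl i ` A"
    proof
      fix xs assume xs: "xs \<in> expvecs L"
      show "xs \<in> A \<union> fl i ` A"
      proof (cases "xs!(i-1) = 0")
        case True thus ?thesis using xs by (auto simp: A_def)
      next
        case False
        hence "xs!(i-1) = 1" using expvecs_nth[OF xs, of "i-1"] i by auto
        hence "fl i xs \<in> A" using nthi[OF xs] fl_expvecs[OF xs i] by (auto simp: A_def)
        moreover have "xs = fl i (fl i xs)" using fl_fl[OF xs i] by simp
        ultimately show ?thesis by blast
      qed
    qed
  qed (use AE fl_expvecs[OF _ i] in auto)
  have disj: "A \<inter> fl i ` A = {}" using nthi by (auto simp: A_def)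
  have finA: "finite A" using AE expvecs_finite finite_subset by blast
  have cflA: "card (fl i ` A) = card A"
    by (rule card_image, rule inj_onI) (metis AE fl_fl[OF _ i] subsetD)
  have cE: "card (expvecs L) = 2^L"
  proof -
    have "expvecs L = {xs. set xs \<subseteq> {0,1} \<and> length xs = L}" by (auto simp: expvecs_def)
    thus ?thesis by (simp add: card_lists_length_eq numeral_2_eq_2)
  qed
  have cA2: "card A + card A = 2^L"
    using card_Un_disjoint[OF finA finite_imageI[OF finA] disj] Eun cE cflA by simp
  have cnt: "card (A \<union> fl j ` A) = (if i = j then 2^L else 2^L div 2)"
  proof (cases "i = j")
    case True thus ?thesis using Eun cE by simp
  next
    case False
    have "fl j ` A = A"
    proof
      show "fl j ` A \<subseteq> A"
        using False fl_expvecs[OF _ j] fl_nth[OF _ j i] AE by (auto simp: A_def expvecs_def)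
      show "A \<subseteq> fl j ` A"
      proof
        fix xs assume xs: "xs \<in> A"
        have "fl j xs \<in> A"
          using xs False fl_expvecs[OF _ j] fl_nth[OF _ j i] AE by (auto simp: A_def expvecs_def)
        moreover have "xs = fl j (fl j xs)" using fl_fl[OF _ j] xs AE by auto
        ultimately show "xs \<in> fl j ` A" by blast
      qed
    qed
    thus ?thesis using False cA2 by simp
  qed
  show ?thesis using rk cnt lV lXV by simp
qed

end
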